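(* If $\dim M=8$, then, writing $\bar A_a=2\cosh(\tfrac a2c)\frac{1}{\cosh^2(\frac12\bar c)}\widehat A(TM,\nabla^{TM})$ and $\bar A_b=2\cosh(\tfrac b2c)\cosh(\tfrac12\bar c)\widehat A(TM,\nabla^{TM})$, $$\{\bar A_a\}^{(8)}-\{\bar A_b\}^{(8)}-\tfrac{1}{16}\{\bar A_b\,\mathrm{ch}(\bar W)\}^{(8)}=-\tfrac1{24}\{P'\bar A_a\}^{(8)}+\tfrac1{24}\{P'\bar A_b\}^{(8)}+\tfrac1{384}\{P'\bar A_b\,\mathrm{ch}(\bar W)\}^{(8)}+\tfrac1{18432}\{P'^2\cdot2\,\mathrm{ch}(\bar W)\}^{(8)}.$$
   Context: $M$ is a Riemannian manifold with Levi-Civita connection $\nabla^{TM}$ and curvature $R^{TM}$; characteristic forms are Chern–Weil forms of the given connections; $\omega^{(i)}$ is the degree-$i$ component. $\mathrm{ch}(E)=\mathrm{tr}\exp(\frac{\sqrt{-1}}{2\pi}R^E)$, extended additively to formal differences; $\widetilde E=E-\dim E\cdot\mathbb{C}$. $\widehat A(TM,\nabla^{TM})=\det^{1/2}\Big(\frac{\frac{\sqrt{-1}}{4\pi}R^{TM}}{\sinh(\frac{\sqrt{-1}}{4\pi}R^{TM})}\Big)$; $p_1$ is the first Pontryagin form. $\xi$ is a complex line bundle with Hermitian connection; $(\xi^{\otimes m})_{\mathbb{R}}$ is the underlying real oriented rank-two bundle of $\xi^{\otimes m}$, $\xi_{\mathbb{R}}=(\xi^{\otimes1})_{\mathbb{R}}$,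 and the formal Chern roots of $\xi_{\mathbb{R}}\otimes\mathbb{C}$ are $\pm c$. $\eta$ is a rank-two real oriented Euclidean bundle with Euclidean connection, $\eta_{\mathbb{C}}=\eta\otimes\mathbb{C}$ with formal Chern roots $\pm\bar c$. $a,b\in\mathbb{Z}$; $P'=p_1(TM)-(a^2+2b^2)p_1(\xi_{\mathbb{R}})$; $\bar W=\widetilde{(\xi^{\otimes b})_{\mathbb{R}}\otimes\mathbb{C}}-\widetilde{(\xi^{\otimes a})_{\mathbb{R}}\otimes\mathbb{C}}+3\widetilde{\eta_{\mathbb{C}}}$. *)

theory Defs
  imports "HOL-Analysis.Analysis"
begin

text \<open>A characteristic form is represented as a (real-analytic) function of the
  formal Chern roots: x 0, ..., x 3 (the roots of TM tensor C are +-x j, j<4,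
  since dim M = 8), c (roots +-c of xi_R tensor C) and cb (roots +-cb of eta_C).
  Each root has form degree 2, so the degree-2k component of a form is the
  k-th Taylor coefficient in t after scaling all roots by t.\<close>

type_synonym charform = "(nat \<Rightarrow> real) \<Rightarrow> real \<Rightarrow> real \<Rightarrow> real"

definition deg_comp :: "nat \<Rightarrow> charform \<Rightarrow> charform" where
  "deg_comp d F = (\<lambda>x c cb. if even d then
      (deriv ^^ (d div 2)) (\<lambda>t. F (\<lambda>j. t * x j) (t * c) (t * cb)) 0 / fact (d div 2)
    else 0)"

definition ahat_fun :: "real \<Rightarrow> real" where
  "ahat_fun y = (if y = 0 then 1 else (y / 2) / sinh (y / 2))"

definition Ahat_TM :: charform where
  "Ahat_TM = (\<lambda>x c cb. \<Prod>j<4. ahat_fun (x j))"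

definition p1_TM :: charform where
  "p1_TM = (\<lambda>x c cb. \<Sum>j<4. (x j)\<^sup>2)"

definition p1_xiR :: charform where
  "p1_xiR = (\<lambda>x c cb. c\<^sup>2)"

text \<open>ch((xi^m)_R tensor C) = e^{mc} + e^{-mc}; ch(eta_C) = e^{cb} + e^{-cb}.\<close>
definition ch_xiR_pow :: "int \<Rightarrow> charform" where
  "ch_xiR_pow m = (\<lambda>x c cb. exp (of_int m * c) + exp (- (of_int m * c)))"

definition ch_etaC :: charform where
  "ch_etaC = (\<lambda>x c cb. exp cb + exp (- cb))"

text \<open>ch of E tilde = ch E - dim E; all bundles here have complex rank 2.\<close>
definition ch_Wbar :: "int \<Rightarrow> int \<Rightarrow> charform" where
  "ch_Wbar a b = (\<lambda>x c cb. (ch_xiR_pow b x c cb - 2) - (ch_xiR_pow a x c cb - 2)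
                          + 3 * (ch_etaC x c cb - 2))"

definition P' :: "int \<Rightarrow> int \<Rightarrow> charform" where
  "P' a b = (\<lambda>x c cb. p1_TM x c cb - of_int (a\<^sup>2 + 2 * b\<^sup>2) * p1_xiR x c cb)"

definition Abar_a :: "int \<Rightarrow> charform" where
  "Abar_a a = (\<lambda>x c cb. 2 * cosh (of_int a / 2 * c) * (1 / (cosh (cb / 2))\<^sup>2) * Ahat_TM x c cb)"

definition Abar_b :: "int \<Rightarrow> charform" where
  "Abar_b b = (\<lambda>x c cb. 2 * cosh (of_int b / 2 * c) * cosh (cb / 2) * Ahat_TM x c cb)"

end

theory Submission imports Defs "HOL-Computational_Algebra.Formal_Power_Series" begin

lemma fps_nth_conv_deriv_real:
  fixes f :: "real fps"
  assumes "fps_conv_radius f > 0"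
  shows   "fps_nth f n = (deriv ^^ n) (eval_fps f) 0 / fact n"
  using assms
proof (induction n arbitrary: f)
  case 0
  thus ?case by (simp add: eval_fps_def)
next
  case (Suc n f)
  have "(deriv ^^ Suc n) (eval_fps f) 0 = (deriv ^^ n) (deriv (eval_fps f)) 0"
    unfolding funpow_Suc_right o_def ..
  also have "eventually (\<lambda>z::real. z \<in> eball 0 (fps_conv_radius f)) (nhds 0)"
    using Suc.prems by (intro eventually_nhds_in_open) (auto simp: zero_ereal_def)
  hence "eventually (\<lambda>z. deriv (eval_fps f) z = eval_fps (fps_deriv f) z) (nhds 0)"
    by eventually_elim (simp add: eval_fps_deriv)
  hence "(deriv ^^ n) (deriv (eval_fps f)) 0 = (deriv ^^ n) (eval_fps (fps_deriv f)) 0"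
    by (intro higher_deriv_cong_ev refl)
  also have "\<dots> / fact n = fps_nth (fps_deriv f) n"
    using Suc.prems fps_conv_radius_deriv[of f] 
    by (intro Suc.IH [symmetric]) auto
  also have "\<dots> / of_nat (Suc n) = fps_nth f (Suc n)"
    by (simp add: fps_deriv_def del: of_nat_Suc)
  finally show ?case by (simp add: field_split_simps)
qed

lemma fps_nth_fps_expansion_real:
  fixes f :: "real \<Rightarrow> real"
  assumes "f has_fps_expansion F"
  shows   "fps_nth F n = (deriv ^^ n) f 0 / fact n"
proof -
  have "fps_nth F n = (deriv ^^ n) (eval_fps F) 0 / fact n"
    using assms by (intro fps_nth_conv_deriv_real) (auto simp: has_fps_expansion_def)
  also have "(deriv ^^ n) (eval_fps F) 0 = (deriv ^^ n) f 0"
    using assms by (intro higher_deriv_cong_ev) (auto simp: has_fps_expansion_def)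
  finally show ?thesis .
qed

lemma deg_comp_8:
  assumes "(\<lambda>t. F (\<lambda>j. t * x j) (t * c) (t * cb)) has_fps_expansion S"
  shows "deg_comp 8 F x c cb = fps_nth S 4"
  using fps_nth_fps_expansion_real[OF assms, of 4] by (simp add: deg_comp_def)

definition jet :: "real fps \<Rightarrow> real \<Rightarrow> real \<Rightarrow> real \<Rightarrow> bool" where
  "jet F f0 f2 f4 \<longleftrightarrow> fps_nth F 0 = f0 \<and> fps_nth F 1 = 0 \<and> fps_nth F 2 = f2 \<and> fps_nth F 3 = 0 \<and> fps_nth F 4 = f4"

lemma sum5: "(\<Sum>i=0..(n::nat). f i) = (\<Sum>i<Suc n. f i)"
  by (simp add: atLeast0AtMost lessThan_Suc_atMost)

lemma jet_mult:
  assumes "jet F f0 f2 f4" "jet G g0 g2 g4"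
  shows "jet (F * G) (f0*g0) (f0*g2 + f2*g0) (f0*g4 + f2*g2 + f4*g0)"
  using assms unfolding jet_def fps_mult_nth sum5 by (simp add: numeral_eq_Suc)

lemma jet_add:
  assumes "jet F f0 f2 f4" "jet G g0 g2 g4"
  shows "jet (F + G) (f0+g0) (f2+g2) (f4+g4)"
  using assms unfolding jet_def by simp

lemma jet_diff:
  assumes "jet F f0 f2 f4" "jet G g0 g2 g4"
  shows "jet (F - G) (f0-g0) (f2-g2) (f4-g4)"
  using assms unfolding jet_def by simp

lemma jet_const: "jet (fps_const k) k 0 0"
  unfolding jet_def by simp

lemma jet_X2: "jet (fps_X ^ 2) 0 1 0"
  unfolding jet_def by (simp add: fps_X_power_iff)

lemma jet_inverse:
  assumes "jet F 1 f2 f4"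
  shows "jet (inverse F) 1 (- f2) (f2^2 - f4)"
proof -
  have F0: "fps_nth F 0 = 1" using assms by (simp add: jet_def)
  define G where "G = inverse F"
  have GF: "G * F = 1" unfolding G_def using F0 by (simp add: inverse_mult_eq_1)
  have e: "fps_nth (G*F) n = (if n = 0 then 1 else 0)" for n using GF by simp
  have G0: "fps_nth G 0 = 1" using e[of 0] F0 by simp
  have G1: "fps_nth G 1 = 0" using e[of 1] assms G0 unfolding jet_def fps_mult_nth sum5
    by (simp add: numeral_eq_Suc)
  have G2: "fps_nth G 2 = - f2" using e[of 2] assms G0 G1 unfolding jet_def fps_mult_nth sum5
    by (simp add: numeral_eq_Suc)
  have G3: "fps_nth G 3 = 0" using e[of 3] assms G0 G1 G2 unfolding jet_def fps_mult_nth sum5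
    by (simp add: numeral_eq_Suc)
  have G4: "fps_nth G 4 = f2^2 - f4" using e[of 4] assms G0 G1 G2 G3 unfolding jet_def fps_mult_nth sum5
    by (simp add: numeral_eq_Suc power2_eq_square)
  show ?thesis using G0 G1 G2 G3 G4 unfolding jet_def G_def by simp
qed

definition Chs :: "real \<Rightarrow> real fps" where
  "Chs k = fps_const (1/2) * (fps_exp k + fps_exp (-k))"

lemma Chs_exp: "(\<lambda>t. cosh (k * t)) has_fps_expansion Chs k"
proof -
  have "(\<lambda>t. (1/2) * (exp (k*t) + exp ((-k)*t))) has_fps_expansion Chs k"
    unfolding Chs_def by (intro fps_expansion_intros)
  moreover have "(\<lambda>t. (1/2) * (exp (k*t) + exp ((-k)*t))) = (\<lambda>t. cosh (k * t))"
    by (auto simp: cosh_def)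
  ultimately show ?thesis by simp
qed

lemma Chs_jet: "jet (Chs k) 1 (k^2/2) (k^4/24)"
  unfolding jet_def Chs_def by (simp add: fact_numeral power_minus_odd)

lemma Es_exp: "(\<lambda>t. exp ((k::real) * t) + exp (- (k * t))) has_fps_expansion (fps_exp k + fps_exp (-k))"
proof -
  have "(\<lambda>t. exp (k*t) + exp ((-k)*t)) has_fps_expansion (fps_exp k + fps_exp (-k))"
    by (intro has_fps_expansion_add has_fps_expansion_exp)
  thus ?thesis by simp
qed

lemma Es_jet: "jet (fps_exp (k::real) + fps_exp (-k)) 2 (k^2) (k^4/12)"
  unfolding jet_def by (simp add: fact_numeral power_minus_odd)

lemma aux22: "2 * (u::real) / (2 * A + 2 * B) = u / (A + B)"
  by (metis distrib_left mult_divide_mult_cancel_left_if zero_neq_numeral)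

definition Scs :: "real \<Rightarrow> real fps" where
  "Scs y = Abs_fps (\<lambda>n. if even n then (y/2)^n / fact (n+1) else 0)"

definition scf :: "real \<Rightarrow> real \<Rightarrow> real" where
  "scf y t = (if t = 0 \<or> y = 0 then 1 else sinh (t*y/2) / (t*y/2))"

lemma Scs_exp: "scf y has_fps_expansion Scs y"
proof (cases "y = 0")
  case True
  have "Scs y = 1" unfolding Scs_def True by (rule fps_ext) (auto simp: zero_power)
  moreover have "scf y = (\<lambda>_. 1)" using True by (auto simp: scf_def)
  ultimately show ?thesis by simp
next
  case False
  define Sh where "Sh = fps_const (1/2) * (fps_exp (y/2) - fps_exp (-(y/2)))"
  have "(\<lambda>t. (1/2) * (exp ((y/2)*t) - exp ((-(y/2))*t))) has_fps_expansion Sh"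
    unfolding Sh_def by (intro fps_expansion_intros)
  moreover have "(\<lambda>t. (1/2) * (exp ((y/2)*t) - exp ((-(y/2))*t))) = (\<lambda>t. sinh ((y/2) * t))"
    by (auto simp: sinh_def)
  ultimately have sh: "(\<lambda>t. sinh ((y/2) * t)) has_fps_expansion Sh" by simp
  have Sh1: "fps_nth Sh 1 = y/2" unfolding Sh_def by simp
  have Shnz: "Sh \<noteq> 0" using Sh1 False by auto
  have "1 \<le> subdegree Sh"
    by (rule subdegree_geI[OF Shnz]) (simp add: Sh_def)
  from has_fps_expansion_shift[OF sh this refl]
  have "(\<lambda>t. if t = 0 then fps_nth Sh 1 else sinh ((y/2) * t) / t ^ 1) has_fps_expansion fps_shift 1 Sh" .
  hence "(\<lambda>t. (2/y) * (if t = 0 then fps_nth Sh 1 else sinh ((y/2) * t) / t ^ 1))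
           has_fps_expansion fps_const (2/y) * fps_shift 1 Sh"
    by (rule has_fps_expansion_cmult_left)
  moreover have "(\<lambda>t. (2/y) * (if t = 0 then fps_nth Sh 1 else sinh ((y/2) * t) / t ^ 1)) = scf y"
    using False Sh1 by (auto simp: scf_def field_simps intro!: ext)
  moreover have "fps_const (2/y) * fps_shift 1 Sh = Scs y"
  proof (rule fps_ext)
    fix n
    show "fps_nth (fps_const (2/y) * fps_shift 1 Sh) n = fps_nth (Scs y) n"
    proof (cases "even n")
      case True
      hence "(-(y/2))^(n+1) = - ((y/2)^(n+1))" by (simp add: power_minus_odd)
      moreover have "(2/y) * ((1/2) * ((y/2)^(n+1) + (y/2)^(n+1)) / fact (n+1)) = (y/2)^n / fact (n+1)"
      proof -
        have "(2/y)*(y/2)^(n+1) = (y/2)^n" using False by (simp add: field_simps)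
        moreover have "(1/2) * ((y/2)^(n+1) + (y/2)^(n+1)) = (y/2)^(n+1::nat)" by simp
        ultimately show ?thesis by (metis times_divide_eq_right)
      qed
      ultimately show ?thesis using True False unfolding Sh_def Scs_def
        by (simp add: aux22 distrib_right)
    next
      case odd: False
      hence "(-(y/2))^(n+1) = ((y/2)^(n+1))" by (simp add: power_minus_even)
      thus ?thesis using odd False unfolding Sh_def Scs_def
        by (simp add: field_simps)
    qed
  qed
  ultimately show ?thesis by simp
qed

lemma Scs_jet: "jet (Scs y) 1 (y^2/24) (y^4/1920)"
  unfolding jet_def Scs_def by (simp add: fact_numeral power_divide)

lemma ahat_eq: "(\<lambda>t. ahat_fun (t * y)) = (\<lambda>t. inverse (scf y t))"
  by (auto simp: ahat_fun_def scf_def field_simps)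

lemma ahat_exp: "(\<lambda>t. ahat_fun (t * y)) has_fps_expansion inverse (Scs y)"
  unfolding ahat_eq
  by (intro has_fps_expansion_inverse Scs_exp) (simp add: Scs_def)

lemma ahat_jet: "jet (inverse (Scs y)) 1 (- (y^2/24)) ((y^2/24)^2 - y^4/1920)"
  by (rule jet_inverse[OF Scs_jet])



lemma jet_weaken: "jet F a b c \<Longrightarrow> a = a' \<Longrightarrow> b = b' \<Longrightarrow> jet F a' b' (fps_nth F 4)"
  by (simp add: jet_def)

lemma jet_cong: "jet F a b c \<Longrightarrow> a = a' \<Longrightarrow> b = b' \<Longrightarrow> c = c' \<Longrightarrow> jet F a' b' c'"
  by (simp add: jet_def)

definition AH :: "(nat \<Rightarrow> real) \<Rightarrow> real fps" where
  "AH x = (\<Prod>j<4. inverse (Scs (x j)))"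

lemma AH_exp: "(\<lambda>t. Ahat_TM (\<lambda>j. t * x j) (t*c) (t*cb)) has_fps_expansion AH x"
  unfolding Ahat_TM_def AH_def by (intro has_fps_expansion_prod ahat_exp)

lemma prod4: "(\<Prod>j<(4::nat). f j) = f 0 * f 1 * f 2 * (f 3 :: 'a :: comm_monoid_mult)"
  by (simp add: numeral_eq_Suc lessThan_Suc mult_ac)

lemma sum4: "(\<Sum>j<(4::nat). f j) = f 0 + f 1 + f 2 + (f 3 :: 'a :: comm_monoid_add)"
  by (simp add: numeral_eq_Suc lessThan_Suc add_ac)

lemma AH_jet: "jet (AH x) 1 (- (\<Sum>j<4. (x j)^2) / 24) (fps_nth (AH x) 4)"
proof -
  note J = jet_mult[OF jet_mult[OF jet_mult[OF ahat_jet[of "x 0"] ahat_jet[of "x 1"]] ahat_jet[of "x 2"]] ahat_jet[of "x 3"]]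
  show ?thesis unfolding AH_def prod4
    by (rule jet_weaken[OF J]) (simp_all add: sum4 field_simps)
qed

definition Ps :: "int \<Rightarrow> int \<Rightarrow> (nat \<Rightarrow> real) \<Rightarrow> real \<Rightarrow> real fps" where
  "Ps a b x c = fps_const ((\<Sum>j<4. (x j)^2) - of_int (a\<^sup>2 + 2 * b\<^sup>2) * c^2) * fps_X^2"

lemma P_exp: "(\<lambda>t. P' a b (\<lambda>j. t * x j) (t*c) (t*cb)) has_fps_expansion Ps a b x c"
proof -
  have "(\<lambda>t. ((\<Sum>j<4. (x j)^2) - of_int (a\<^sup>2 + 2 * b\<^sup>2) * c^2) * t^2) has_fps_expansion Ps a b x c"
    unfolding Ps_def by (intro has_fps_expansion_cmult_left has_fps_expansion_fps_X_power)
  moreover have "(\<lambda>t. ((\<Sum>j<4. (x j)^2) - of_int (a\<^sup>2 + 2 * b\<^sup>2) * c^2) * t^2) = 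
     (\<lambda>t. P' a b (\<lambda>j. t * x j) (t*c) (t*cb))"
    by (auto simp: P'_def p1_TM_def p1_xiR_def sum4 algebra_simps power_mult_distrib intro!: ext)
  ultimately show ?thesis by simp
qed

lemma P_jet: "jet (Ps a b x c) 0 ((\<Sum>j<4. (x j)^2) - of_int (a\<^sup>2 + 2 * b\<^sup>2) * c^2) 0"
  unfolding Ps_def using jet_mult[OF jet_const jet_X2] by simp

definition Ws :: "int \<Rightarrow> int \<Rightarrow> real \<Rightarrow> real \<Rightarrow> real fps" where
  "Ws a b c cb = ((fps_exp (of_int b * c) + fps_exp (- (of_int b * c))) - fps_const 2)
     - ((fps_exp (of_int a * c) + fps_exp (- (of_int a * c))) - fps_const 2)
     + fps_const 3 * ((fps_exp cb + fps_exp (- cb)) - fps_const 2)"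

lemma W_exp: "(\<lambda>t. ch_Wbar a b (\<lambda>j. t * x j) (t*c) (t*cb)) has_fps_expansion Ws a b c cb"
proof -
  have "(\<lambda>t. ((exp ((of_int b * c) * t) + exp (- ((of_int b * c) * t))) - 2)
     - ((exp ((of_int a * c) * t) + exp (- ((of_int a * c) * t))) - 2)
     + 3 * ((exp (cb * t) + exp (- (cb * t))) - 2)) has_fps_expansion Ws a b c cb"
    unfolding Ws_def
    by (intro has_fps_expansion_add has_fps_expansion_diff has_fps_expansion_cmult_left
          Es_exp has_fps_expansion_const)
  moreover have "(\<lambda>t. ((exp ((of_int b * c) * t) + exp (- ((of_int b * c) * t))) - 2)
     - ((exp ((of_int a * c) * t) + exp (- ((of_int a * c) * t))) - 2)
     + 3 * ((exp (cb * t) + exp (- (cb * t))) - 2)) = (\<lambda>t. ch_Wbar a b (\<lambda>j. t * x j) (t*c) (t*cb))"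
    by (auto simp: ch_Wbar_def ch_xiR_pow_def ch_etaC_def mult_ac intro!: ext)
  ultimately show ?thesis by simp
qed

lemma W_jet: "jet (Ws a b c cb) 0 ((of_int b * c)^2 - (of_int a * c)^2 + 3 * cb^2)
   (((of_int b * c)^4 - (of_int a * c)^4 + 3 * cb^4) / 12)"
proof -
  note J = jet_add[OF jet_diff[OF jet_diff[OF Es_jet[of "of_int b * c"] jet_const[of 2]] jet_diff[OF Es_jet[of "of_int a * c"] jet_const[of 2]]]
     jet_mult[OF jet_const[of 3] jet_diff[OF Es_jet[of cb] jet_const[of 2]]]]
  show ?thesis unfolding Ws_def
    by (rule jet_cong[OF J]) simp_all
qed

definition S1 :: "int \<Rightarrow> (nat \<Rightarrow> real) \<Rightarrow> real \<Rightarrow> real \<Rightarrow> real fps" where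
  "S1 a x c cb = fps_const 2 * Chs (of_int a / 2 * c) * inverse (Chs (cb/2) * Chs (cb/2)) * AH x"

definition S2 :: "int \<Rightarrow> (nat \<Rightarrow> real) \<Rightarrow> real \<Rightarrow> real \<Rightarrow> real fps" where
  "S2 b x c cb = fps_const 2 * Chs (of_int b / 2 * c) * Chs (cb/2) * AH x"

lemma S1_exp: "(\<lambda>t. Abar_a a (\<lambda>j. t * x j) (t*c) (t*cb)) has_fps_expansion S1 a x c cb"
proof -
  have nz: "fps_nth (Chs (cb/2) * Chs (cb/2)) 0 \<noteq> 0"
    using Chs_jet[of "cb/2"] by (simp add: jet_def)
  have "(\<lambda>t. 2 * cosh ((of_int a / 2 * c) * t) * inverse (cosh ((cb/2) * t) * cosh ((cb/2) * t))
      * Ahat_TM (\<lambda>j. t * x j) (t*c) (t*cb)) has_fps_expansion S1 a x c cb"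
    unfolding S1_def
    by (rule has_fps_expansion_mult[OF has_fps_expansion_mult[OF has_fps_expansion_cmult_left[OF Chs_exp]
          has_fps_expansion_inverse[OF has_fps_expansion_mult[OF Chs_exp Chs_exp] nz]] AH_exp])
  moreover have "(\<lambda>t. 2 * cosh ((of_int a / 2 * c) * t) * inverse (cosh ((cb/2) * t) * cosh ((cb/2) * t))
      * Ahat_TM (\<lambda>j. t * x j) (t*c) (t*cb)) = (\<lambda>t. Abar_a a (\<lambda>j. t * x j) (t*c) (t*cb))"
    proof (rule ext)
    fix t
    have e1: "of_int a / 2 * c * t = of_int a / 2 * (t * c)" by simp
    have e2: "cb / 2 * t = t * cb / 2" by simp
    show "2 * cosh ((of_int a / 2 * c) * t) * inverse (cosh ((cb/2) * t) * cosh ((cb/2) * t))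
      * Ahat_TM (\<lambda>j. t * x j) (t*c) (t*cb) = Abar_a a (\<lambda>j. t * x j) (t*c) (t*cb)"
      unfolding Abar_a_def e1 e2 power2_eq_square inverse_eq_divide by (rule refl)
  qed
  ultimately show ?thesis by simp
qed

lemma S2_exp: "(\<lambda>t. Abar_b b (\<lambda>j. t * x j) (t*c) (t*cb)) has_fps_expansion S2 b x c cb"
proof -
  have "(\<lambda>t. 2 * cosh ((of_int b / 2 * c) * t) * cosh ((cb/2) * t)
      * Ahat_TM (\<lambda>j. t * x j) (t*c) (t*cb)) has_fps_expansion S2 b x c cb"
    unfolding S2_def
    by (rule has_fps_expansion_mult[OF has_fps_expansion_mult[OF has_fps_expansion_cmult_left[OF Chs_exp]
          Chs_exp] AH_exp])
  moreover have "(\<lambda>t. 2 * cosh ((of_int b / 2 * c) * t) * cosh ((cb/2) * t)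
      * Ahat_TM (\<lambda>j. t * x j) (t*c) (t*cb)) = (\<lambda>t. Abar_b b (\<lambda>j. t * x j) (t*c) (t*cb))"
    proof (rule ext)
    fix t
    have e1: "of_int b / 2 * c * t = of_int b / 2 * (t * c)" by simp
    have e2: "cb / 2 * t = t * cb / 2" by simp
    show "2 * cosh ((of_int b / 2 * c) * t) * cosh ((cb/2) * t)
      * Ahat_TM (\<lambda>j. t * x j) (t*c) (t*cb) = Abar_b b (\<lambda>j. t * x j) (t*c) (t*cb)"
      unfolding Abar_b_def e1 e2 by simp
  qed
  ultimately show ?thesis by simp
qed

lemma jet_4: "jet F a b c \<Longrightarrow> fps_nth F 4 = c"
  by (simp add: jet_def)

lemma HH_jet: "jet (Chs h * Chs h) 1 (h^2) (h^4/3)"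
  by (rule jet_cong[OF jet_mult[OF Chs_jet Chs_jet]]) (simp_all add: eval_nat_numeral field_simps)

lemma power2_exp: "(f :: real \<Rightarrow> real) has_fps_expansion F \<Longrightarrow> (\<lambda>t. (f t)^2) has_fps_expansion F^2"
  unfolding power2_eq_square by (rule has_fps_expansion_mult)

theorem corollary4p3:
  fixes a b :: int and x :: "nat \<Rightarrow> real" and c cb :: real
  shows
  "deg_comp 8 (Abar_a a) x c cb - deg_comp 8 (Abar_b b) x c cb
     - 1/16 * deg_comp 8 (\<lambda>x c cb. Abar_b b x c cb * ch_Wbar a b x c cb) x c cb
   = - 1/24 * deg_comp 8 (\<lambda>x c cb. P' a b x c cb * Abar_a a x c cb) x c cb
     + 1/24 * deg_comp 8 (\<lambda>x c cb. P' a b x c cb * Abar_b b x c cb) x c cb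
     + 1/384 * deg_comp 8 (\<lambda>x c cb. P' a b x c cb * Abar_b b x c cb * ch_Wbar a b x c cb) x c cb
     + 1/18432 * deg_comp 8 (\<lambda>x c cb. (P' a b x c cb)\<^sup>2 * 2 * ch_Wbar a b x c cb) x c cb"
proof -
  have d1: "deg_comp 8 (Abar_a a) x c cb = fps_nth (S1 a x c cb) 4"
    by (rule deg_comp_8) (rule S1_exp)
  have d2: "deg_comp 8 (Abar_b b) x c cb = fps_nth (S2 b x c cb) 4"
    by (rule deg_comp_8) (rule S2_exp)
  have d3: "deg_comp 8 (\<lambda>x c cb. Abar_b b x c cb * ch_Wbar a b x c cb) x c cb
      = fps_nth (S2 b x c cb * Ws a b c cb) 4"
    by (rule deg_comp_8) (rule has_fps_expansion_mult[OF S2_exp W_exp])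
  have d4: "deg_comp 8 (\<lambda>x c cb. P' a b x c cb * Abar_a a x c cb) x c cb
      = fps_nth (Ps a b x c * S1 a x c cb) 4"
    by (rule deg_comp_8) (rule has_fps_expansion_mult[OF P_exp S1_exp])
  have d5: "deg_comp 8 (\<lambda>x c cb. P' a b x c cb * Abar_b b x c cb) x c cb
      = fps_nth (Ps a b x c * S2 b x c cb) 4"
    by (rule deg_comp_8) (rule has_fps_expansion_mult[OF P_exp S2_exp])
  have d6: "deg_comp 8 (\<lambda>x c cb. P' a b x c cb * Abar_b b x c cb * ch_Wbar a b x c cb) x c cb
      = fps_nth (Ps a b x c * S2 b x c cb * Ws a b c cb) 4"
    by (rule deg_comp_8) (rule has_fps_expansion_mult[OF has_fps_expansion_mult[OF P_exp S2_exp] W_exp])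
  have d7: "deg_comp 8 (\<lambda>x c cb. (P' a b x c cb)\<^sup>2 * 2 * ch_Wbar a b x c cb) x c cb
      = fps_nth ((Ps a b x c)^2 * fps_const 2 * Ws a b c cb) 4"
    by (rule deg_comp_8)
       (rule has_fps_expansion_mult[OF has_fps_expansion_cmult_right[OF power2_exp[OF P_exp]] W_exp])
  note JS1 = jet_mult[OF jet_mult[OF jet_mult[OF jet_const[of 2] Chs_jet[of "of_int a / 2 * c"]]
      jet_inverse[OF HH_jet[of "cb/2"]]] AH_jet[of x]]
  note JS2 = jet_mult[OF jet_mult[OF jet_mult[OF jet_const[of 2] Chs_jet[of "of_int b / 2 * c"]]
      Chs_jet[of "cb/2"]] AH_jet[of x]]
  note JW = W_jet[of a b c cb]
  note JP = P_jet[of a b x c]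
  note e1 = jet_4[OF JS1, folded S1_def]
  note e2 = jet_4[OF JS2, folded S2_def]
  note e3 = jet_4[OF jet_mult[OF JS2 JW], folded S2_def]
  note e4 = jet_4[OF jet_mult[OF JP JS1], folded S1_def]
  note e5 = jet_4[OF jet_mult[OF JP JS2], folded S2_def]
  note e6 = jet_4[OF jet_mult[OF jet_mult[OF JP JS2] JW], folded S2_def]
  note e7 = jet_4[OF jet_mult[OF jet_mult[OF jet_mult[OF JP JP] jet_const[of 2]] JW], folded power2_eq_square]
  show ?thesis
    unfolding d1 d2 d3 d4 d5 d6 d7 e1 e2 e3 e4 e5 e6 e7
    by (simp add: field_simps)
qed

end
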